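(* For every $M$ with $0\le M<\frac12$, every deterministic semi-online algorithm with migration factor $M$ for scheduling on two hierarchical machines with known optimal makespan (bin stretching) has competitive ratio at least $\frac32$.
   Context: Model (two hierarchical machines with migration, bin stretching). Jobs $1,2,\dots,n$ arrive one by one ($n$ unknown in advance). Job $j$ has a size $p_j>0$ and a grade of service (GoS) $g_j\in\{1,2\}$; a job of GoS $1$ may only be processed on machine $m_1$, a job of GoS $2$ may be processed on $m_1$ or on $m_2$. The load of a machine is the total size of its jobs, the makespan is the maximum load. When job $j$ arrives, the algorithm must assign it, and may migrate previously arrived jobs (respecting GoS) of total size at most $M\cdot p_j$ (migration factor $M$). Bin stretching: the optimal offline makespan of the complete input is known in advance to the algorithm (scaled to $1$). The competitive ratio is the supremum over inputs of (algorithm's makespan)/(optimal makespan). *)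

theory Defs
  imports Complex_Main "HOL-Library.Extended_Real"
begin

datatype machine = M1 | M2

text \<open>A job is a pair (size, grade of service); GoS 1 = only m1, GoS 2 = m1 or m2.\<close>
type_synonym job = "real \<times> nat"

text \<open>An assignment maps job indices (0-based, in arrival order) to machines.\<close>
type_synonym assignment = "nat \<Rightarrow> machine"

definition valid_input :: "job list \<Rightarrow> bool" where
  "valid_input js \<longleftrightarrow> js \<noteq> [] \<and> (\<forall>j\<in>set js. fst j > 0 \<and> snd j \<in> {1,2})"

definition respects_gos :: "job list \<Rightarrow> assignment \<Rightarrow> bool" where
  "respects_gos js f \<longleftrightarrow> (\<forall>i<length js. snd (js ! i) = 1 \<longrightarrow> f i = M1)"

definition load :: "job list \<Rightarrow> assignment \<Rightarrow> machine \<Rightarrow> real" where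
  "load js f m = (\<Sum>i\<in>{i. i < length js \<and> f i = m}. fst (js ! i))"

definition makespan :: "job list \<Rightarrow> assignment \<Rightarrow> real" where
  "makespan js f = max (load js f M1) (load js f M2)"

definition opt :: "job list \<Rightarrow> real" where
  "opt js = Inf {makespan js f | f. respects_gos js f}"

text \<open>A deterministic semi-online algorithm (bin stretching): given the known optimal
  makespan T of the complete input and the prefix of jobs arrived so far, it returns the
  current assignment of all arrived jobs (after assigning the newest job and performing
  migrations). Determinism: the schedule is a function of T and the prefix.\<close>
type_synonym algorithm = "real \<Rightarrow> job list \<Rightarrow> assignment"

definition migrated :: "algorithm \<Rightarrow> real \<Rightarrow> job list \<Rightarrow> nat \<Rightarrow> real" where
  "migrated A T js k = (\<Sum>i\<in>{i. i < k \<and> A T (take k js) i \<noteq> A T (take (Suc k) js) i}.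
      fst (js ! i))"

definition feasible_alg :: "real \<Rightarrow> algorithm \<Rightarrow> bool" where
  "feasible_alg M A \<longleftrightarrow>
    (\<forall>js. valid_input js \<longrightarrow>
       (\<forall>k\<le>length js. respects_gos (take k js) (A (opt js) (take k js))) \<and>
       (\<forall>k<length js. migrated A (opt js) js k \<le> M * fst (js ! k)))"

definition competitive_ratio :: "algorithm \<Rightarrow> ereal" where
  "competitive_ratio A =
     (SUP js\<in>{js. valid_input js}. ereal (makespan js (A (opt js) js) / opt js))"

end

theory Submission
  imports Defs
begin

lemma load_eq: "load js f m = (\<Sum>i<length js. if f i = m then fst (js!i) else 0)"
proof -
  have "{i. i < length js \<and> f i = m} = {i\<in>{..<length js}. f i = m}" by auto
  then show ?thesis unfolding load_def
    using sum.inter_filter[of "{..<length js}" "\<lambda>i. fst (js!i)" "\<lambda>i. f i = m"] by simp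
qed

definition L1 :: "job list" where "L1 = [(1,1),(1,2),(1,1)]"
definition L2 :: "job list" where "L2 = [(1,1),(1,2),(2,2)]"

lemma opt_of:
  assumes "respects_gos js f" "makespan js f = 2"
    and "\<And>h. respects_gos js h \<Longrightarrow> makespan js h \<ge> 2"
  shows "opt js = 2"
  unfolding opt_def by (rule cInf_eq_minimum) (use assms in auto)

lemma optL1: "opt L1 = 2"
proof (rule opt_of[where f="\<lambda>i. if i = 1 then M2 else M1"])
  show "respects_gos L1 (\<lambda>i. if i = 1 then M2 else M1)"
    by (auto simp: respects_gos_def L1_def)
  show "makespan L1 (\<lambda>i. if i = 1 then M2 else M1) = 2"
    by (simp add: makespan_def load_eq L1_def eval_nat_numeral)
  fix h assume "respects_gos L1 h"
  then have "h 0 = M1" "h 2 = M1" by (auto simp: respects_gos_def L1_def)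
  then show "makespan L1 h \<ge> 2" unfolding makespan_def
    by (cases "h 1") (simp_all add: load_eq L1_def eval_nat_numeral)
qed

lemma optL2: "opt L2 = 2"
proof (rule opt_of[where f="\<lambda>i. if i = 2 then M2 else M1"])
  show "respects_gos L2 (\<lambda>i. if i = 2 then M2 else M1)"
    by (auto simp: respects_gos_def L2_def)
  show "makespan L2 (\<lambda>i. if i = 2 then M2 else M1) = 2"
    by (simp add: makespan_def load_eq L2_def eval_nat_numeral)
  fix h assume "respects_gos L2 h"
  then have "h 0 = M1" by (auto simp: respects_gos_def L2_def)
  then show "makespan L2 h \<ge> 2" unfolding makespan_def
    by (cases "h 1"; cases "h 2") (simp_all add: load_eq L2_def eval_nat_numeral)
qed

lemma validL1: "valid_input L1" by (simp add: valid_input_def L1_def)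
lemma validL2: "valid_input L2" by (simp add: valid_input_def L2_def)

lemma mig_ge:
  assumes "i < k" "A T (take k js) i \<noteq> A T (take (Suc k) js) i"
    and "\<forall>j\<in>set js. fst j > 0" and "k < length js"
  shows "fst (js ! i) \<le> migrated A T js k"
  unfolding migrated_def
proof (rule member_le_sum)
  show "i \<in> {i. i < k \<and> A T (take k js) i \<noteq> A T (take (Suc k) js) i}" using assms by auto
  show "finite {i. i < k \<and> A T (take k js) i \<noteq> A T (take (Suc k) js) i}" by auto
  show "0 \<le> fst (js ! x)" if "x \<in> {i. i < k \<and> A T (take k js) i \<noteq> A T (take (Suc k) js) i} - {i}" for x
    using assms that by (auto intro!: less_imp_le nth_mem)
qed

theorem mainTheorem16:
  fixes M :: real and A :: algorithm
  assumes "0 \<le> M" and "M < 1/2"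
    and "feasible_alg M A"
  shows "competitive_ratio A \<ge> ereal (3/2)"
proof -
  have ub: "ereal (makespan js (A (opt js) js) / opt js) \<le> competitive_ratio A"
    if "valid_input js" for js
    unfolding competitive_ratio_def by (rule SUP_upper) (use that in auto)
  have P2: "take 2 L1 = take 2 L2" by (simp add: L1_def L2_def)
  have t3a: "take 3 L1 = L1" by (simp add: L1_def)
  have t3b: "take 3 L2 = L2" by (simp add: L2_def)
  have F1: "respects_gos L1 (A 2 L1)" "migrated A 2 L1 2 \<le> M * 1"
  proof -
    have "(\<forall>k\<le>length L1. respects_gos (take k L1) (A (opt L1) (take k L1))) \<and>
       (\<forall>k<length L1. migrated A (opt L1) L1 k \<le> M * fst (L1 ! k))"
      using assms(3) validL1 unfolding feasible_alg_def by blast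
    moreover have "length L1 = 3" "take 3 L1 = L1" "fst (L1 ! 2) = 1" by (simp_all add: L1_def)
    ultimately show "respects_gos L1 (A 2 L1)" "migrated A 2 L1 2 \<le> M * 1"
      by (auto simp: optL1 simp del: One_nat_def dest: spec[of _ 2] spec[of _ 3])
  qed
  have F2: "respects_gos L2 (A 2 L2)" "migrated A 2 L2 2 \<le> M * 2"
  proof -
    have "(\<forall>k\<le>length L2. respects_gos (take k L2) (A (opt L2) (take k L2))) \<and>
       (\<forall>k<length L2. migrated A (opt L2) L2 k \<le> M * fst (L2 ! k))"
      using assms(3) validL2 unfolding feasible_alg_def by blast
    moreover have "length L2 = 3" "take 3 L2 = L2" "fst (L2 ! 2) = 2" by (simp_all add: L2_def)
    ultimately show "respects_gos L2 (A 2 L2)" "migrated A 2 L2 2 \<le> M * 2"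
      by (auto simp: optL2 simp del: One_nat_def dest: spec[of _ 2] spec[of _ 3])
  qed
  show ?thesis
  proof (cases "A 2 (take 2 L1) 1")
    case M1
    have "A 2 L1 1 = M1"
    proof (rule ccontr)
      assume "A 2 L1 1 \<noteq> M1"
      then have "A 2 (take 2 L1) 1 \<noteq> A 2 (take (Suc 2) L1) 1" using M1 t3a by simp
      then have "fst (L1 ! 1) \<le> migrated A 2 L1 2"
        by (intro mig_ge) (auto simp: L1_def)
      then show False using F1 assms by (simp add: L1_def)
    qed
    moreover have "A 2 L1 0 = M1" "A 2 L1 2 = M1" using F1(1)
      by (auto simp: respects_gos_def L1_def)
    ultimately have "makespan L1 (A 2 L1) \<ge> 3" unfolding makespan_def
      by (simp add: load_eq L1_def eval_nat_numeral)
    then have "ereal (3/2) \<le> ereal (makespan L1 (A (opt L1) L1) / opt L1)"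
      by (simp add: optL1)
    also have "\<dots> \<le> competitive_ratio A" by (rule ub[OF validL1])
    finally show ?thesis .
  next
    case M2
    have "A 2 L2 1 = M2"
    proof (rule ccontr)
      assume "A 2 L2 1 \<noteq> M2"
      then have "A 2 (take 2 L2) 1 \<noteq> A 2 (take (Suc 2) L2) 1" using M2 t3b P2 by simp
      then have "fst (L2 ! 1) \<le> migrated A 2 L2 2"
        by (intro mig_ge) (auto simp: L2_def)
      then show False using F2 assms by (simp add: L2_def)
    qed
    moreover have "A 2 L2 0 = M1" using F2(1)
      by (auto simp: respects_gos_def L2_def)
    ultimately have "makespan L2 (A 2 L2) \<ge> 3" unfolding makespan_def
      by (cases "A 2 L2 2") (simp_all add: load_eq L2_def eval_nat_numeral)
    then have "ereal (3/2) \<le> ereal (makespan L2 (A (opt L2) L2) / opt L2)"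
      by (simp add: optL2)
    also have "\<dots> \<le> competitive_ratio A" by (rule ub[OF validL2])
    finally show ?thesis .
  qed
qed

end
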